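(* Let $\varphi,\phi\in\mathbb{R}$ with $\varphi\neq 0$ and consider the two non-commuting reflection matrices in $\operatorname{SU}(1,1)$ $$M_A=\begin{pmatrix} i\cosh\varphi & e^{i\phi}\sinh\varphi\\ e^{-i\phi}\sinh\varphi & -i\cosh\varphi\end{pmatrix},\qquad M_B=\begin{pmatrix} i&0\\0&-i\end{pmatrix}.$$ Let $\Pi_n=M_1M_2\cdots M_n$ where each $M_j$ is drawn independently from $\{M_A,M_B\}$ with probabilities $p_A=p_B=1/2$, and write $\Pi_n=\begin{pmatrix}\alpha_n&\beta_n\\ \beta_n^*&\alpha_n^*\end{pmatrix}$. Define the (chiral) energy per unit cell $E(n)=\frac{\pi c}{12\,l}(|\alpha_n|^2+|\beta_n|^2)$. Then for even $n$, $\mathbb{E}(E(n+2))=\mathbb{E}(E(n))\cdot\cosh^2(\varphi)$, and $\mathbb{E}(E(n+1))=\mathbb{E}(E(n+2))$, so the ensemble-averaged energy grows exponentially with rate $\lambda_E:=\lim_{n\to\infty}\frac{1}{2n}\log\mathbb{E}(E(n))=\frac{1}{2}\log\cosh(\varphi)>0$.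
   Context: Randomly driven (1+1)d CFT with $\operatorname{SL}_2$ (single-wavelength) deformed Hamiltonians; each driving step acts on operators by a Möbius transformation given by an $\operatorname{SU}(1,1)$ matrix. A type I exceptional point is where both driving steps produce reflection (traceless) $\operatorname{SU}(1,1)$ matrices; after an $\operatorname{SU}(1,1)$ conjugation the two matrices can be brought to the form $M_A,M_B$ stated in the claim (a global conjugation does not affect the growth rate). Since $M_A^2=M_B^2=-\mathbb{I}$, for $n=2k$ any product containing $k-r+s$ factors $M_A$ and $k+s-r$ factors $M_B$ equals $(-1)^k\begin{pmatrix}\cosh((k-r-s)\varphi) & ie^{i\phi}\sinh((k-r-s)\varphi)\\ -ie^{-i\phi}\sinh((k-r-s)\varphi) & \cosh((k-r-s)\varphi)\end{pmatrix}$, occurring with total probability $p_{r,s}=2^{-n}\binom{k}{r}\binom{k}{s}$, giving $\mathbb{E}(E(n))=\frac{\pi c}{12 l}\sum_{r,s=0}^k p_{r,s}\cosh[2(k-r-s)\varphi]$. Here $c$ is the central charge and $l$ the deformation wavelength. *)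

theory Defs
  imports "HOL-Analysis.Analysis"
begin

definition mat2 :: "complex \<Rightarrow> complex \<Rightarrow> complex \<Rightarrow> complex \<Rightarrow> complex^2^2" where
  "mat2 a b c d = (\<chi> i j. if i = 1 then (if j = 1 then a else b) else (if j = 1 then c else d))"

definition M_A :: "real \<Rightarrow> real \<Rightarrow> complex^2^2" where
  "M_A \<phi>' \<phi> = mat2 (\<i> * of_real (cosh \<phi>')) (cis \<phi> * of_real (sinh \<phi>'))
                     (cis (- \<phi>) * of_real (sinh \<phi>')) (- \<i> * of_real (cosh \<phi>'))"

definition M_B :: "complex^2^2" where
  "M_B = mat2 \<i> 0 0 (- \<i>)"

definition Pi_prod :: "real \<Rightarrow> real \<Rightarrow> bool list \<Rightarrow> complex^2^2" where
  "Pi_prod \<phi>' \<phi> xs = foldr (\<lambda>b P. (if b then M_A \<phi>' \<phi> else M_B) ** P) xs (mat 1)"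

definition energy :: "real \<Rightarrow> real \<Rightarrow> complex^2^2 \<Rightarrow> real" where
  "energy c l P = pi * c / (12 * l) * ((cmod (P $ 1 $ 1))\<^sup>2 + (cmod (P $ 1 $ 2))\<^sup>2)"

text \<open>Ensemble average over i.i.d. choices with p_A = p_B = 1/2: uniform average over all
  2^n driving sequences of length n.\<close>
definition mean_energy :: "real \<Rightarrow> real \<Rightarrow> real \<Rightarrow> real \<Rightarrow> nat \<Rightarrow> real" where
  "mean_energy c l \<phi>' \<phi> n =
     (\<Sum>xs\<in>{xs :: bool list. length xs = n}. energy c l (Pi_prod \<phi>' \<phi> xs)) / 2 ^ n"

end

theory Submission
  imports Defs
begin

lemma Im_cx: "complex_of_real (Im y) = (y - cnj y) / (2 * \<i>)"
  by (simp add: complex_eq_iff)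

lemma alg1:
  fixes p q r t w :: complex and c s :: real
  assumes "w * cnj w = 1"
  shows "(cmod (\<i> * c * p + w * s * r))\<^sup>2 + (cmod (\<i> * c * q + w * s * t))\<^sup>2
     = c^2 * ((cmod p)\<^sup>2 + (cmod q)\<^sup>2) + s^2 * ((cmod r)\<^sup>2 + (cmod t)\<^sup>2)
       - 2 * c * s * Im (cnj w * (p * cnj r + q * cnj t))"
proof -
  have ii: "\<i> * \<i> = -1" by simp
  have "complex_of_real ((cmod (\<i> * c * p + w * s * r))\<^sup>2 + (cmod (\<i> * c * q + w * s * t))\<^sup>2)
     = complex_of_real (c^2 * ((cmod p)\<^sup>2 + (cmod q)\<^sup>2) + s^2 * ((cmod r)\<^sup>2 + (cmod t)\<^sup>2)
       - 2 * c * s * Im (cnj w * (p * cnj r + q * cnj t)))"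
    unfolding of_real_add of_real_mult of_real_diff complex_norm_square Im_cx
    using assms apply (simp add: divide_simps) using ii by algebra
  then show ?thesis using of_real_eq_iff by blast
qed

lemma alg2:
  fixes p q r t w :: complex and c s :: real
  assumes "w * cnj w = 1"
  shows "(cmod (cnj w * s * p + - \<i> * c * r))\<^sup>2 + (cmod (cnj w * s * q + - \<i> * c * t))\<^sup>2
     = s^2 * ((cmod p)\<^sup>2 + (cmod q)\<^sup>2) + c^2 * ((cmod r)\<^sup>2 + (cmod t)\<^sup>2)
       - 2 * c * s * Im (cnj w * (p * cnj r + q * cnj t))"
proof -
  have ii: "\<i> * \<i> = -1" by simp
  have "complex_of_real ((cmod (cnj w * s * p + - \<i> * c * r))\<^sup>2 + (cmod (cnj w * s * q + - \<i> * c * t))\<^sup>2)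
     = complex_of_real (s^2 * ((cmod p)\<^sup>2 + (cmod q)\<^sup>2) + c^2 * ((cmod r)\<^sup>2 + (cmod t)\<^sup>2)
       - 2 * c * s * Im (cnj w * (p * cnj r + q * cnj t)))"
    unfolding of_real_add of_real_mult of_real_diff complex_norm_square Im_cx
    using assms apply (simp add: divide_simps) using ii by algebra
  then show ?thesis using of_real_eq_iff by blast
qed

lemma alg3:
  fixes p q r t w :: complex and c s :: real
  assumes "w * cnj w = 1"
  shows "Im (cnj w * ((\<i> * c * p + w * s * r) * cnj (cnj w * s * p + - \<i> * c * r)
             + (\<i> * c * q + w * s * t) * cnj (cnj w * s * q + - \<i> * c * t)))
     = c * s * (((cmod p)\<^sup>2 + (cmod q)\<^sup>2) + ((cmod r)\<^sup>2 + (cmod t)\<^sup>2))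
       - (s^2 + c^2) * Im (cnj w * (p * cnj r + q * cnj t))"
proof -
  have ii: "\<i> * \<i> = -1" by simp
  have "complex_of_real (Im (cnj w * ((\<i> * c * p + w * s * r) * cnj (cnj w * s * p + - \<i> * c * r)
             + (\<i> * c * q + w * s * t) * cnj (cnj w * s * q + - \<i> * c * t))))
     = complex_of_real (c * s * (((cmod p)\<^sup>2 + (cmod q)\<^sup>2) + ((cmod r)\<^sup>2 + (cmod t)\<^sup>2))
       - (s^2 + c^2) * Im (cnj w * (p * cnj r + q * cnj t)))"
    unfolding of_real_add of_real_mult of_real_diff complex_norm_square Im_cx
    using assms apply (simp add: divide_simps) using ii by algebra
  then show ?thesis using of_real_eq_iff by blast
qed

lemma alg4:
  fixes p q r t w :: complex
  shows "Im (cnj w * ((\<i> * p + 0 * r) * cnj (0 * p + - \<i> * r)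
             + (\<i> * q + 0 * t) * cnj (0 * q + - \<i> * t)))
     = - Im (cnj w * (p * cnj r + q * cnj t))"
    "(cmod (\<i> * p + 0 * r))\<^sup>2 + (cmod (\<i> * q + 0 * t))\<^sup>2 = (cmod p)\<^sup>2 + (cmod q)\<^sup>2"
    "(cmod (0 * p + - \<i> * r))\<^sup>2 + (cmod (0 * q + - \<i> * t))\<^sup>2 = (cmod r)\<^sup>2 + (cmod t)\<^sup>2"
  by (simp_all add: norm_mult algebra_simps)

lemma mat2_mult:
  "(mat2 a b c d ** P) $ 1 $ 1 = a * P$1$1 + b * P$2$1"
  "(mat2 a b c d ** P) $ 1 $ (2::2) = a * P$1$2 + b * P$2$2"
  "(mat2 a b c d ** P) $ 2 $ 1 = c * P$1$1 + d * P$2$1"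
  "(mat2 a b c d ** P) $ 2 $ (2::2) = c * P$1$2 + d * P$2$2"
  by (simp_all add: matrix_matrix_mult_def mat2_def sum_2)

definition e1 :: "complex^2^2 \<Rightarrow> real" where
  "e1 P = (cmod (P$1$1))\<^sup>2 + (cmod (P$1$(2::2)))\<^sup>2"
definition e2 :: "complex^2^2 \<Rightarrow> real" where
  "e2 P = (cmod (P$2$1))\<^sup>2 + (cmod (P$2$(2::2)))\<^sup>2"
definition vv :: "real \<Rightarrow> complex^2^2 \<Rightarrow> real" where
  "vv \<phi> P = Im (cnj (cis \<phi>) * (P$1$1 * cnj (P$2$1) + P$1$(2::2) * cnj (P$2$2)))"

lemma wcnj: "cis \<phi> * cnj (cis \<phi>) = 1"
  by (simp add: cis_cnj cis_mult)

lemma MA_entries: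
  "(M_A a \<phi> ** P)$1$1 = \<i> * cosh a * P$1$1 + cis \<phi> * sinh a * P$2$1"
  "(M_A a \<phi> ** P)$1$(2::2) = \<i> * cosh a * P$1$2 + cis \<phi> * sinh a * P$2$2"
  "(M_A a \<phi> ** P)$2$1 = cnj (cis \<phi>) * sinh a * P$1$1 + - \<i> * cosh a * P$2$1"
  "(M_A a \<phi> ** P)$2$(2::2) = cnj (cis \<phi>) * sinh a * P$1$2 + - \<i> * cosh a * P$2$2"
  unfolding M_A_def mat2_mult by (simp_all add: cis_cnj)

lemma MA_step:
  "e1 (M_A a \<phi> ** P) = (cosh a)^2 * e1 P + (sinh a)^2 * e2 P - 2 * cosh a * sinh a * vv \<phi> P"
  "e2 (M_A a \<phi> ** P) = (sinh a)^2 * e1 P + (cosh a)^2 * e2 P - 2 * cosh a * sinh a * vv \<phi> P"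
  "vv \<phi> (M_A a \<phi> ** P) = cosh a * sinh a * (e1 P + e2 P) - ((sinh a)^2 + (cosh a)^2) * vv \<phi> P"
  unfolding e1_def e2_def vv_def MA_entries
  by (rule alg1[OF wcnj], rule alg2[OF wcnj], rule alg3[OF wcnj])

lemma MB_step:
  "e1 (M_B ** P) = e1 P" "e2 (M_B ** P) = e2 P" "vv \<phi> (M_B ** P) = - vv \<phi> P"
  unfolding M_B_def e1_def e2_def vv_def mat2_mult
  using alg4(1)[where w="cis \<phi>" and p="P$1$1" and r="P$2$1" and q="P$1$2" and t="P$2$2"] alg4(2,3)
  by (simp_all add: cis_cnj)


lemma lists_Suc: "{xs :: bool list. length xs = Suc n} =
   Cons True ` {xs. length xs = n} \<union> Cons False ` {xs. length xs = n}"
  by (auto simp: length_Suc_conv image_iff)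

lemma sum_lists_Suc:
  "(\<Sum>xs\<in>{xs :: bool list. length xs = Suc n}. f xs)
    = (\<Sum>xs\<in>{xs. length xs = n}. f (True # xs)) + (\<Sum>xs\<in>{xs. length xs = n}. f (False # xs))"
proof -
  have fin: "finite {xs :: bool list. length xs = n}"
    using finite_lists_length_eq[of "UNIV :: bool set" n] by simp
  show ?thesis unfolding lists_Suc
    by (subst sum.union_disjoint) (auto simp: fin sum.reindex)
qed

lemma Pi_Cons: "Pi_prod a \<phi> (b # xs) = (if b then M_A a \<phi> else M_B) ** Pi_prod a \<phi> xs"
  by (simp add: Pi_prod_def)

definition S1 where "S1 a \<phi> n = (\<Sum>xs\<in>{xs :: bool list. length xs = n}. e1 (Pi_prod a \<phi> xs))"
definition S2 where "S2 a \<phi> n = (\<Sum>xs\<in>{xs :: bool list. length xs = n}. e2 (Pi_prod a \<phi> xs))"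
definition SV where "SV a \<phi> n = (\<Sum>xs\<in>{xs :: bool list. length xs = n}. vv \<phi> (Pi_prod a \<phi> xs))"

lemma S_rec:
  "S1 a \<phi> (Suc n) = (cosh a)^2 * S1 a \<phi> n + (sinh a)^2 * S2 a \<phi> n - 2 * cosh a * sinh a * SV a \<phi> n + S1 a \<phi> n"
  "S2 a \<phi> (Suc n) = (sinh a)^2 * S1 a \<phi> n + (cosh a)^2 * S2 a \<phi> n - 2 * cosh a * sinh a * SV a \<phi> n + S2 a \<phi> n"
  "SV a \<phi> (Suc n) = cosh a * sinh a * (S1 a \<phi> n + S2 a \<phi> n) - ((sinh a)^2 + (cosh a)^2) * SV a \<phi> n - SV a \<phi> n"
  unfolding S1_def S2_def SV_def sum_lists_Suc Pi_Cons
  by (simp_all add: MA_step MB_step sum.distrib sum_subtractf sum_distrib_left sum_negf distrib_left)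

lemma S_even:
  "S1 a \<phi> (2*k) = 4^k * (cosh a)^(2*k) \<and> S2 a \<phi> (2*k) = 4^k * (cosh a)^(2*k) \<and> SV a \<phi> (2*k) = 0"
proof (induction k)
  case 0
  have "{xs :: bool list. length xs = 0} = {[]}" by auto
  then show ?case by (simp add: S1_def S2_def SV_def Pi_prod_def e1_def e2_def vv_def mat_def)
next
  case (Suc k)
  define X where "X = 4^k * (cosh a)^(2*k)"
  have h: "(cosh a)^2 - (sinh a)^2 = 1" by (rule hyperbolic_pythagoras)
  have A: "S1 a \<phi> (2*k) = X" "S2 a \<phi> (2*k) = X" "SV a \<phi> (2*k) = 0"
    using Suc.IH X_def by auto
  have B1: "S1 a \<phi> (Suc (2*k)) = 2*(cosh a)^2 * X"
    unfolding S_rec A using h by algebra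
  have B2: "S2 a \<phi> (Suc (2*k)) = 2*(cosh a)^2 * X"
    unfolding S_rec A using h by algebra
  have B3: "SV a \<phi> (Suc (2*k)) = 2*cosh a * sinh a * X"
    unfolding S_rec A by simp
  note B = B1 B2 B3
  have C1: "S1 a \<phi> (Suc (Suc (2*k))) = 4*(cosh a)^2 * X"
    unfolding S_rec(1)[of a \<phi> "Suc (2*k)"] B using h by algebra
  have C2: "S2 a \<phi> (Suc (Suc (2*k))) = 4*(cosh a)^2 * X"
    unfolding S_rec(2)[of a \<phi> "Suc (2*k)"] B using h by algebra
  have C3: "SV a \<phi> (Suc (Suc (2*k))) = 0"
    unfolding S_rec(3)[of a \<phi> "Suc (2*k)"] B using h by algebra
  note C = C1 C2 C3
  have eq: "2 * Suc k = Suc (Suc (2*k))" by simp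
  have D: "4^(Suc k) * (cosh a)^(2*Suc k) = 4*(cosh a)^2 * X"
    unfolding X_def by (simp add: power_add power_mult power2_eq_square)
  show ?case unfolding D unfolding eq C by simp
qed

lemma S_odd:
  "S1 a \<phi> (2*k+1) = 2 * 4^k * (cosh a)^(2*k+2)"
proof -
  have h: "(cosh a)^2 - (sinh a)^2 = 1" by (rule hyperbolic_pythagoras)
  define X where "X = 4^k * (cosh a)^(2*k)"
  have A: "S1 a \<phi> (2*k) = X" "S2 a \<phi> (2*k) = X" "SV a \<phi> (2*k) = 0"
    using S_even[of a \<phi> k] X_def by auto
  have "S1 a \<phi> (Suc (2*k)) = 2*(cosh a)^2 * X"
    unfolding S_rec A using h by algebra
  then show ?thesis unfolding X_def by (simp add: power_add power2_eq_square)
qed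

lemma mean_S: "mean_energy c l a \<phi> n = pi * c / (12 * l) * S1 a \<phi> n / 2^n"
  unfolding mean_energy_def S1_def energy_def e1_def by (simp add: sum_distrib_left)

lemma mean_closed: "mean_energy c l a \<phi> n = pi * c / (12 * l) * (cosh a)^(2 * ((n+1) div 2))"
proof (cases "even n")
  case True
  then obtain k where n: "n = 2*k" by blast
  have "(n+1) div 2 = k" using n by simp
  then show ?thesis unfolding mean_S using S_even[of a \<phi> k] n by (simp add: power_mult)
next
  case False
  then obtain k where n: "n = 2*k+1" using oddE by blast
  have "(n+1) div 2 = k+1" using n by simp
  then show ?thesis unfolding mean_S using S_odd[of a \<phi> k] n by (simp add: power_mult power_add)
qed


theorem mainTheorem2:
  fixes \<phi>' \<phi> c l :: real
  assumes "\<phi>' \<noteq> 0" and "c > 0" and "l > 0"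
  shows "(\<forall>n. even n \<longrightarrow>
            mean_energy c l \<phi>' \<phi> (n + 2) = mean_energy c l \<phi>' \<phi> n * (cosh \<phi>')\<^sup>2 \<and>
            mean_energy c l \<phi>' \<phi> (n + 1) = mean_energy c l \<phi>' \<phi> (n + 2))
       \<and> (\<lambda>n. ln (mean_energy c l \<phi>' \<phi> n) / (2 * real n)) \<longlonglongrightarrow> ln (cosh \<phi>') / 2
       \<and> ln (cosh \<phi>') / 2 > 0"
proof (intro conjI allI impI)
  define K where "K = pi * c / (12 * l)"
  define L where "L = ln (cosh \<phi>')"
  have Kpos: "K > 0" unfolding K_def using assms by simp
  have cgt: "cosh \<phi>' > 1" using cosh_real_ge_1[of \<phi>'] assms(1) cosh_real_one_iff[of \<phi>'] by linarith
  then have Lpos: "L > 0" unfolding L_def by simp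
  then show "ln (cosh \<phi>') / 2 > 0" unfolding L_def by simp
  fix n :: nat
  assume "even n"
  then obtain k where n: "n = 2*k" by blast
  have a1: "(n + 2 + 1) div 2 = k + 1" "(n+1) div 2 = k" "(n + 1 + 1) div 2 = k + 1" using n by simp_all
  show "mean_energy c l \<phi>' \<phi> (n + 2) = mean_energy c l \<phi>' \<phi> n * (cosh \<phi>')\<^sup>2"
    unfolding mean_closed a1 by (simp add: power_add power_mult power2_eq_square)
  show "mean_energy c l \<phi>' \<phi> (n + 1) = mean_energy c l \<phi>' \<phi> (n + 2)"
    unfolding mean_closed a1 by simp
next
  define K where "K = pi * c / (12 * l)"
  define L where "L = ln (cosh \<phi>')"
  have Kpos: "K > 0" unfolding K_def using assms by simp
  have cgt: "cosh \<phi>' > 1" using cosh_real_ge_1[of \<phi>'] assms(1) cosh_real_one_iff[of \<phi>'] by linarith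
  then have Lpos: "L > 0" unfolding L_def by simp
  have f: "ln (mean_energy c l \<phi>' \<phi> n) / (2 * real n)
      = (ln K + real (2 * ((n+1) div 2)) * L) / (2 * real n)" for n
    unfolding mean_closed K_def[symmetric] L_def using Kpos cgt
    by (simp add: ln_mult ln_realpow)
  have lo: "L/2 + (ln K / 2) / real n \<le> (ln K + real (2 * ((n+1) div 2)) * L) / (2 * real n)"
    if "n \<ge> 1" for n
  proof -
    have t: "real n \<le> real (2 * ((n+1) div 2))" by linarith
    have "L/2 + (ln K / 2) / real n = (ln K + real n * L) / (2 * real n)"
      using that by (simp add: field_simps)
    also have "\<dots> \<le> (ln K + real (2 * ((n+1) div 2)) * L) / (2 * real n)"
      using that t Lpos by (intro divide_right_mono add_left_mono mult_right_mono) auto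
    finally show ?thesis .
  qed
  have hi: "(ln K + real (2 * ((n+1) div 2)) * L) / (2 * real n) \<le> L/2 + ((ln K + L) / 2) / real n"
    if "n \<ge> 1" for n
  proof -
    have t: "real (2 * ((n+1) div 2)) \<le> real n + 1" by linarith
    have "(ln K + real (2 * ((n+1) div 2)) * L) / (2 * real n) \<le> (ln K + (real n + 1) * L) / (2 * real n)"
      using that t Lpos by (intro divide_right_mono add_left_mono mult_right_mono) auto
    also have "\<dots> = L/2 + ((ln K + L) / 2) / real n"
      using that by (simp add: field_simps)
    finally show ?thesis .
  qed
  have g1: "(\<lambda>n. L/2 + (ln K / 2) / real n) \<longlonglongrightarrow> L/2 + 0"
    by (intro tendsto_intros)
  have g2: "(\<lambda>n. L/2 + ((ln K + L) / 2) / real n) \<longlonglongrightarrow> L/2 + 0"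
    by (intro tendsto_intros)
  have ev1: "eventually (\<lambda>n. L/2 + (ln K / 2) / real n \<le> (ln K + real (2 * ((n+1) div 2)) * L) / (2 * real n)) sequentially"
    unfolding eventually_sequentially using lo by blast
  have ev2: "eventually (\<lambda>n. (ln K + real (2 * ((n+1) div 2)) * L) / (2 * real n) \<le> L/2 + ((ln K + L) / 2) / real n) sequentially"
    unfolding eventually_sequentially using hi by blast
  have "(\<lambda>n. (ln K + real (2 * ((n+1) div 2)) * L) / (2 * real n)) \<longlonglongrightarrow> L/2"
    using tendsto_sandwich[OF ev1 ev2] g1 g2 by simp
  then show "(\<lambda>n. ln (mean_energy c l \<phi>' \<phi> n) / (2 * real n)) \<longlonglongrightarrow> ln (cosh \<phi>') / 2"
    unfolding f L_def .
qed

end
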